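(* Let $p\in R_{\delta+\omega}$. (i) Each $p_{n,\alpha}$ is determined by finitely many variables $x_{l,k}$ with $l<n$. (ii) Each $x_{n,m}$ is determined by finitely many terms $p_{l,k}$ with $l>n$ and $k\in\omega$. More generally, for every ordinal $\beta<\delta$ and every $n\in\omega$ and $\alpha$ with $\beta+\omega\le\alpha<\delta+\omega$, there are $r\in\omega$ and $(l_i,\zeta_i)_{i<r}$ with $l_i>n$ and $\beta<\zeta_i<\beta+\omega$ such that for all assignments $a,b$: if $p_{n,\alpha}\circ a\ne p_{n,\alpha}\circ b$ then $(p_{l_i,\zeta_i}\circ a)_{i<r}\ne(p_{l_i,\zeta_i}\circ b)_{i<r}$.
   Context: Throughout, $\delta$ denotes a nonzero countable limit ordinal. Terms: variables are $x_{l,k}$ ($l,k\in\omega$), each taking values in $\{0,1\}$. A term $t$ is given by a finite sequence of variables $(v_0,\dots,v_{r-1})$ and a function $F:2^r\to2$; a variable $v$ is identified with the term $((v),\mathrm{id})$. An assignment $a$ maps variables to $\{0,1\}$ and extends to terms by $t\circ a=F(v_0\circ a,\dots,v_{r-1}\circ a)$. Terms are identified modulo $t=^*s$ iff $t\circ a=s\circ a$ for all assignments $a$. A term depends only on variables in $Y$ if it is $=^*$ to a term using only variables from $Y$. A term or variable $s$ is determined by terms $t_0,\dots,t_n$ if for all assignments $a,b$, $(t_i\circ a)_{i\le n}=(t_i\circ b)_{i\le n}$ implies $s\circ a=s\circ b$. The forcing $\tilde P$: a condition $\tilde p$ has height $\mathrm{ht}(\tilde p)<\omega_1$ and consists of,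 for every limit $\delta<\mathrm{ht}(\tilde p)$ and $n,m,k\in\omega$: a cofinal $\nu_{\delta,n,m}\subseteq\delta$ of order type $\omega$, with $\nu_{\delta,n,m_1}\cap\nu_{\delta,n,m_2}=\emptyset$ for $m_1\ne m_2$; a strictly increasing $j_{\delta,n,m}:\omega\to\omega$; and a surjective $f_{\delta,n,m,k}:2^{[j_{\delta,n,m}(k),\,j_{\delta,n,m}(k+1)-1]}\to2$; ordered by extension. For $\eta$ into $2$ with domain containing $\nu_{\delta,n,m}$, with $\zeta_i$ the $i$-th element of $\nu_{\delta,n,m}$, $g_{\delta,n,m,k}(\eta)=f_{\delta,n,m,k}((\eta(\zeta_i))_{j_{\delta,n,m}(k)\le i<j_{\delta,n,m}(k+1)})$. A function $\eta'$ with $\delta+m$ in its domain and $\eta$ cohere at $\delta+m$ above $k_0$ (with respect to level $n$) if $\eta'(\delta+m)=g_{\delta,n,m,k}(\eta)$ for all $k\ge k_0$. The set $R$: $R=\bigcup_{\delta<\omega_1}R_{\delta+\omega}$, where $p\in R_{\delta+\omega}$ consists of $\tilde p\in\tilde P$ with $\mathrm{ht}(\tilde p)=\delta+1$ and terms $\bar p=(p_{n,\alpha})_{n\in\omega,\alpha<\delta+\omega}$ such that $p_{n,\delta+m}=x_{n,m}$; for $\alpha<\delta$, $p_{n,\alpha}$ depends only on variables $x_{l,k}$ with $l<n$; and for all $n,m\in\omega$ and all limit $\alpha\le\delta$ there is $k_0$ such that for every assignment $a$, $p_{n,\alpha+m}\circ a=g_{\alpha,n,m,k}((p_{n+1,\zeta}\circ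 a)_{\zeta<\alpha})$ for all $k\ge k_0$ (computed from $\tilde p$). Conditions $p,q$ are identified if $\tilde p=\tilde q$ and $p_{n,\alpha}=^*q_{n,\alpha}$ for all $n,\alpha$. *)

theory Defs
  imports Main "HOL-Library.Infinite_Set" "HOL-Library.Countable_Set"
begin

section \<open>Ordinals, modelled as elements of a well-ordered type without maximum\<close>

definition ozero :: "'o::{wellorder,no_top}" where
  "ozero = (LEAST x. True)"

definition osucc :: "'o::{wellorder,no_top} \<Rightarrow> 'o" where
  "osucc x = (LEAST y. x < y)"

definition oadd :: "'o::{wellorder,no_top} \<Rightarrow> nat \<Rightarrow> 'o" where
  "oadd x m = (osucc ^^ m) x"

definition olimit :: "'o::{wellorder,no_top} \<Rightarrow> bool" where
  "olimit x \<longleftrightarrow> (\<exists>y. y < x) \<and> (\<forall>y. y < x \<longrightarrow> osucc y < x)"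

definition ofin :: "nat \<Rightarrow> 'o::{wellorder,no_top}" where
  "ofin k = oadd ozero k"

text \<open>S is a cofinal subset of gamma of order type omega\<close>
definition cofinal_omega :: "'o::{wellorder,no_top} set \<Rightarrow> 'o \<Rightarrow> bool" where
  "cofinal_omega S \<gamma> \<longleftrightarrow> S \<subseteq> {x. x < \<gamma>} \<and> (\<forall>y. y < \<gamma> \<longrightarrow> (\<exists>x\<in>S. y < x))
     \<and> infinite S \<and> (\<forall>x\<in>S. finite {y\<in>S. y < x})"

text \<open>A term: a finite sequence of variables x_{l,k} (encoded as pairs (l,k)) and a
  boolean function on lists (of the length of the variable sequence).\<close>
type_synonym vterm = "(nat \<times> nat) list \<times> (bool list \<Rightarrow> bool)"
type_synonym assignment = "nat \<times> nat \<Rightarrow> bool"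

definition teval :: "vterm \<Rightarrow> assignment \<Rightarrow> bool" where
  "teval t a = snd t (map a (fst t))"

definition tvar :: "nat \<times> nat \<Rightarrow> vterm" where
  "tvar v = ([v], hd)"

definition teq :: "vterm \<Rightarrow> vterm \<Rightarrow> bool" where
  "teq t s \<longleftrightarrow> (\<forall>a. teval t a = teval s a)"

definition depends_only :: "vterm \<Rightarrow> (nat \<times> nat) set \<Rightarrow> bool" where
  "depends_only t Y \<longleftrightarrow> (\<exists>s. set (fst s) \<subseteq> Y \<and> teq t s)"

definition determined_by :: "vterm \<Rightarrow> vterm list \<Rightarrow> bool" where
  "determined_by s ts \<longleftrightarrow>
     (\<forall>a b. map (\<lambda>t. teval t a) ts = map (\<lambda>t. teval t b) ts \<longrightarrow> teval s a = teval s b)"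

text \<open>Data of a condition p-tilde: nu gamma n m, j gamma n m, f gamma n m k
  (f as a function on bool lists of length j(k+1) - j(k), the list indexed by
   i = j(k), ..., j(k+1)-1).\<close>

definition gfun ::
  "('o::{wellorder,no_top} \<Rightarrow> nat \<Rightarrow> nat \<Rightarrow> 'o set) \<Rightarrow> ('o \<Rightarrow> nat \<Rightarrow> nat \<Rightarrow> nat \<Rightarrow> nat)
   \<Rightarrow> ('o \<Rightarrow> nat \<Rightarrow> nat \<Rightarrow> nat \<Rightarrow> bool list \<Rightarrow> bool)
   \<Rightarrow> 'o \<Rightarrow> nat \<Rightarrow> nat \<Rightarrow> nat \<Rightarrow> ('o \<Rightarrow> bool) \<Rightarrow> bool" where
  "gfun \<nu> j f \<gamma> n m k \<eta> =
     f \<gamma> n m k (map (\<lambda>i. \<eta> (enumerate (\<nu> \<gamma> n m) i)) [j \<gamma> n m k ..< j \<gamma> n m (Suc k)])"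

text \<open>p-tilde of height delta+1: data for every limit gamma \<le> delta.\<close>
definition tP_height_succ ::
  "'o::{wellorder,no_top} \<Rightarrow> ('o \<Rightarrow> nat \<Rightarrow> nat \<Rightarrow> 'o set) \<Rightarrow> ('o \<Rightarrow> nat \<Rightarrow> nat \<Rightarrow> nat \<Rightarrow> nat)
   \<Rightarrow> ('o \<Rightarrow> nat \<Rightarrow> nat \<Rightarrow> nat \<Rightarrow> bool list \<Rightarrow> bool) \<Rightarrow> bool" where
  "tP_height_succ \<delta> \<nu> j f \<longleftrightarrow>
    (\<forall>\<gamma>. olimit \<gamma> \<and> \<gamma> \<le> \<delta> \<longrightarrow>
       (\<forall>n m. cofinal_omega (\<nu> \<gamma> n m) \<gamma>)
     \<and> (\<forall>n m1 m2. m1 \<noteq> m2 \<longrightarrow> \<nu> \<gamma> n m1 \<inter> \<nu> \<gamma> n m2 = {})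
     \<and> (\<forall>n m. strict_mono (j \<gamma> n m))
     \<and> (\<forall>n m k b. \<exists>w. length w = j \<gamma> n m (Suc k) - j \<gamma> n m k \<and> f \<gamma> n m k w = b))"

text \<open>p = (p-tilde, p-bar) belongs to R_{delta+omega}; p-bar is given by p n alpha
  (only values with alpha < delta + omega are relevant).\<close>
definition in_R ::
  "'o::{wellorder,no_top} \<Rightarrow> ('o \<Rightarrow> nat \<Rightarrow> nat \<Rightarrow> 'o set) \<Rightarrow> ('o \<Rightarrow> nat \<Rightarrow> nat \<Rightarrow> nat \<Rightarrow> nat)
   \<Rightarrow> ('o \<Rightarrow> nat \<Rightarrow> nat \<Rightarrow> nat \<Rightarrow> bool list \<Rightarrow> bool) \<Rightarrow> (nat \<Rightarrow> 'o \<Rightarrow> vterm) \<Rightarrow> bool" where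
  "in_R \<delta> \<nu> j f p \<longleftrightarrow>
     tP_height_succ \<delta> \<nu> j f
   \<and> (\<forall>n m. teq (p n (oadd \<delta> m)) (tvar (n, m)))
   \<and> (\<forall>n \<alpha>. \<alpha> < \<delta> \<longrightarrow> depends_only (p n \<alpha>) {(l, k). l < n})
   \<and> (\<forall>n m \<gamma>. olimit \<gamma> \<and> \<gamma> \<le> \<delta> \<longrightarrow>
        (\<exists>k0. \<forall>a k. k0 \<le> k \<longrightarrow>
           teval (p n (oadd \<gamma> m)) a = gfun \<nu> j f \<gamma> n m k (\<lambda>\<zeta>. teval (p (Suc n) \<zeta>) a)))"

end

theory Submission
  imports Defs
begin

lemma osucc_gt: "(x::'o::{wellorder,no_top}) < osucc x"
  unfolding osucc_def by (rule LeastI_ex) (rule gt_ex)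

lemma osucc_least: "(x::'o::{wellorder,no_top}) < y \<Longrightarrow> osucc x \<le> y"
  unfolding osucc_def by (rule Least_le)

lemma oadd_0[simp]: "oadd x 0 = x" by (simp add: oadd_def)
lemma oadd_Suc[simp]: "oadd x (Suc m) = osucc (oadd x m)" by (simp add: oadd_def)

lemma oadd_ge: "(x::'o::{wellorder,no_top}) \<le> oadd x m"
  by (induct m) (auto intro: order.trans less_imp_le[OF osucc_gt])

lemma oadd_less_limit: "olimit (\<gamma>::'o::{wellorder,no_top}) \<Longrightarrow> x < \<gamma> \<Longrightarrow> oadd x m < \<gamma>"
  by (induct m) (auto simp: olimit_def)

lemma le_oadd_eq: "(\<beta>::'o::{wellorder,no_top}) \<le> \<zeta> \<Longrightarrow> \<zeta> \<le> oadd \<beta> m \<Longrightarrow> \<exists>m'. \<zeta> = oadd \<beta> m'"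
proof (induct m)
  case 0 then show ?case by (metis antisym oadd_0)
next
  case (Suc m)
  show ?case
  proof (cases "\<zeta> \<le> oadd \<beta> m")
    case True then show ?thesis using Suc by blast
  next
    case False
    then have "osucc (oadd \<beta> m) \<le> \<zeta>" by (intro osucc_least) simp
    then show ?thesis using Suc(3) by (metis antisym oadd_Suc)
  qed
qed

lemma decomp: "(\<forall>m. oadd (\<beta>::'o::{wellorder,no_top}) m < \<alpha>) \<Longrightarrow>
   \<exists>\<gamma> m. olimit \<gamma> \<and> \<beta> < \<gamma> \<and> \<alpha> = oadd \<gamma> m"
proof (induct \<alpha> rule: less_induct)
  case (less \<alpha>)
  show ?case
  proof (cases "olimit \<alpha>")
    case True
    then show ?thesis using less(2)[rule_format, of 0] by (metis oadd_0)
  next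
    case False
    have "\<beta> < \<alpha>" using less(2)[rule_format, of 0] by simp
    with False obtain y where y: "y < \<alpha>" "\<not> osucc y < \<alpha>" unfolding olimit_def by blast
    have ya: "osucc y = \<alpha>" using y osucc_least[OF y(1)] by simp
    have "\<forall>m. oadd \<beta> m < y"
    proof
      fix m
      show "oadd \<beta> m < y"
      proof (rule ccontr)
        assume "\<not> oadd \<beta> m < y"
        then have "y \<le> oadd \<beta> m" by simp
        then have "y < osucc (oadd \<beta> m)" using osucc_gt by (rule le_less_trans)
        then have "osucc y \<le> oadd \<beta> (Suc m)" using osucc_least by simp
        then show False using less(2)[rule_format, of "Suc m"] ya by simp
      qed
    qed
    from less(1)[OF y(1) this] obtain \<gamma> m where "olimit \<gamma>" "\<beta> < \<gamma>" "y = oadd \<gamma> m" by blast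
    then show ?thesis using ya by (metis oadd_Suc)
  qed
qed

lemma enum_large:
  fixes S :: "'o::{wellorder,no_top} set"
  assumes "cofinal_omega S \<gamma>" "z < \<gamma>"
  shows "\<exists>i0. \<forall>i\<ge>i0. z < enumerate S i"
proof -
  have inf: "infinite S" using assms(1) by (simp add: cofinal_omega_def)
  obtain x where x: "x \<in> S" "z < x" using assms unfolding cofinal_omega_def by blast
  have fin: "finite {y\<in>S. y < x}" using assms(1) x(1) unfolding cofinal_omega_def by blast
  have "{i. enumerate S i \<le> z} \<subseteq> enumerate S -` {y\<in>S. y < x}"
    using x(2) enumerate_in_set[OF inf] by fastforce
  moreover have "finite (enumerate S -` {y\<in>S. y < x})"
    using fin inj_enumerate[OF inf] by (rule finite_vimageI)
  ultimately have "finite {i. enumerate S i \<le> z}" by (rule finite_subset)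
  then obtain k where "{i. enumerate S i \<le> z} \<subseteq> {..<k}" using finite_nat_bounded by blast
  then show ?thesis by (intro exI[of _ k]) (auto simp: not_le[symmetric])
qed

lemma main_iii:
  fixes \<delta> :: "'o::{wellorder,no_top}"
  assumes R: "in_R \<delta> \<nu> j f p"
  shows "(\<forall>m. oadd \<beta> m < \<alpha>) \<Longrightarrow> (\<exists>m0. \<alpha> < oadd \<delta> m0) \<Longrightarrow>
    \<exists>zs. (\<forall>(l, \<zeta>)\<in>set zs. n < l \<and> \<beta> < \<zeta> \<and> (\<exists>m. \<zeta> = oadd \<beta> m))
      \<and> (\<forall>a b. teval (p n \<alpha>) a \<noteq> teval (p n \<alpha>) b \<longrightarrow>
            (\<exists>(l, \<zeta>)\<in>set zs. teval (p l \<zeta>) a \<noteq> teval (p l \<zeta>) b))"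
proof (induct \<alpha> arbitrary: n rule: less_induct)
  case (less \<alpha> n)
  obtain \<gamma> m where g: "olimit \<gamma>" "\<beta> < \<gamma>" "\<alpha> = oadd \<gamma> m" using decomp[OF less(2)] by blast
  obtain m0 where m0: "\<alpha> < oadd \<delta> m0" using less(3) by blast
  have ga: "\<gamma> \<le> \<alpha>" using g(3) oadd_ge by simp
  have gd: "\<gamma> \<le> \<delta>"
  proof (rule ccontr)
    assume "\<not> \<gamma> \<le> \<delta>"
    then have "oadd \<delta> m0 < \<gamma>" using oadd_less_limit[OF g(1)] by simp
    then show False using m0 ga by simp
  qed
  have Rc: "tP_height_succ \<delta> \<nu> j f \<and> (\<forall>n m. teq (p n (oadd \<delta> m)) (tvar (n, m)))
   \<and> (\<forall>n \<alpha>. \<alpha> < \<delta> \<longrightarrow> depends_only (p n \<alpha>) {(l, k). l < n})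
   \<and> (\<forall>n m \<gamma>. olimit \<gamma> \<and> \<gamma> \<le> \<delta> \<longrightarrow>
        (\<exists>k0. \<forall>a k. k0 \<le> k \<longrightarrow>
           teval (p n (oadd \<gamma> m)) a = gfun \<nu> j f \<gamma> n m k (\<lambda>\<zeta>. teval (p (Suc n) \<zeta>) a)))"
    using R unfolding in_R_def .
  have "\<exists>k0. \<forall>a k. k0 \<le> k \<longrightarrow>
      teval (p n (oadd \<gamma> m)) a = gfun \<nu> j f \<gamma> n m k (\<lambda>\<zeta>. teval (p (Suc n) \<zeta>) a)"
    using conjunct2[OF conjunct2[OF conjunct2[OF Rc]], rule_format, of \<gamma> n m] g(1) gd by simp
  then obtain k0 where k0: "\<forall>a k. k0 \<le> k \<longrightarrow>
      teval (p n (oadd \<gamma> m)) a = gfun \<nu> j f \<gamma> n m k (\<lambda>\<zeta>. teval (p (Suc n) \<zeta>) a)"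
    by (rule exE)
  have tp: "tP_height_succ \<delta> \<nu> j f" using Rc by (rule conjunct1)
  have tpg: "(\<forall>n m. cofinal_omega (\<nu> \<gamma> n m) \<gamma>)
     \<and> (\<forall>n m1 m2. m1 \<noteq> m2 \<longrightarrow> \<nu> \<gamma> n m1 \<inter> \<nu> \<gamma> n m2 = {})
     \<and> (\<forall>n m. strict_mono (j \<gamma> n m))
     \<and> (\<forall>n m k b. \<exists>w. length w = j \<gamma> n m (Suc k) - j \<gamma> n m k \<and> f \<gamma> n m k w = b)"
    using tp g(1) gd unfolding tP_height_succ_def by simp
  have cof: "cofinal_omega (\<nu> \<gamma> n m) \<gamma>" using conjunct1[OF tpg] by simp
  have sm: "strict_mono (j \<gamma> n m)" using conjunct1[OF conjunct2[OF conjunct2[OF tpg]]] by simp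
  define E where "E \<zeta> = (\<exists>zs. (\<forall>(l, \<zeta>')\<in>set zs. n < l \<and> \<beta> < \<zeta>' \<and> (\<exists>m. \<zeta>' = oadd \<beta> m))
      \<and> (\<forall>a b. teval (p (Suc n) \<zeta>) a \<noteq> teval (p (Suc n) \<zeta>) b \<longrightarrow>
            (\<exists>(l, \<zeta>')\<in>set zs. teval (p l \<zeta>') a \<noteq> teval (p l \<zeta>') b)))" for \<zeta>
  have "\<exists>z. z < \<gamma> \<and> (\<forall>\<zeta>. z < \<zeta> \<longrightarrow> \<zeta> < \<gamma> \<longrightarrow> E \<zeta>)"
  proof (cases "\<exists>z<\<gamma>. \<forall>m'. oadd \<beta> m' < z")
    case True
    then obtain z where z: "z < \<gamma>" "\<forall>m'. oadd \<beta> m' < z" by blast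
    have "E \<zeta>" if "z < \<zeta>" "\<zeta> < \<gamma>" for \<zeta>
    proof -
      have h1: "\<forall>m'. oadd \<beta> m' < \<zeta>" using z(2) that(1) by (blast intro: less_trans)
      have h2: "\<exists>m0. \<zeta> < oadd \<delta> m0" using that(2) gd by (intro exI[of _ 0]) simp
      have "\<zeta> < \<alpha>" using that(2) ga by simp
      from less(1)[OF this h1 h2, of "Suc n"] obtain zs where
        "(\<forall>(l, \<zeta>')\<in>set zs. Suc n < l \<and> \<beta> < \<zeta>' \<and> (\<exists>m. \<zeta>' = oadd \<beta> m))"
        "(\<forall>a b. teval (p (Suc n) \<zeta>) a \<noteq> teval (p (Suc n) \<zeta>) b \<longrightarrow>
            (\<exists>(l, \<zeta>')\<in>set zs. teval (p l \<zeta>') a \<noteq> teval (p l \<zeta>') b))" by blast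
      then show ?thesis unfolding E_def by (intro exI[of _ zs]) auto
    qed
    then show ?thesis using z(1) by blast
  next
    case False
    have "E \<zeta>" if th: "\<beta> < \<zeta>" "\<zeta> < \<gamma>" for \<zeta>
    proof -
      obtain m' where "\<zeta> \<le> oadd \<beta> m'" using False th(2) by (meson not_less)
      then obtain m'' where "\<zeta> = oadd \<beta> m''" using le_oadd_eq th(1) by (meson less_imp_le)
      then show ?thesis unfolding E_def using th(1) by (intro exI[of _ "[(Suc n, \<zeta>)]"]) auto
    qed
    then show ?thesis using g(2) by blast
  qed
  then obtain z where z: "z < \<gamma>" "\<And>\<zeta>. z < \<zeta> \<Longrightarrow> \<zeta> < \<gamma> \<Longrightarrow> E \<zeta>" by blast
  obtain i0 where i0: "\<forall>i\<ge>i0. z < enumerate (\<nu> \<gamma> n m) i" using enum_large[OF cof z(1)] by blast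
  define k where "k = max k0 i0"
  define I where "I = [j \<gamma> n m k ..< j \<gamma> n m (Suc k)]"
  have inf: "infinite (\<nu> \<gamma> n m)" using cof by (simp add: cofinal_omega_def)
  have "\<forall>i\<in>set I. E (enumerate (\<nu> \<gamma> n m) i)"
  proof
    fix i assume "i \<in> set I"
    then have "k \<le> i" unfolding I_def using strict_mono_imp_increasing[OF sm, of k] by simp
    then have "z < enumerate (\<nu> \<gamma> n m) i" using i0 unfolding k_def by simp
    moreover have "enumerate (\<nu> \<gamma> n m) i < \<gamma>"
      using enumerate_in_set[OF inf] cof unfolding cofinal_omega_def by blast
    ultimately show "E (enumerate (\<nu> \<gamma> n m) i)" using z(2) by blast
  qed
  then have "\<exists>Z. \<forall>i\<in>set I. (\<forall>(l, \<zeta>')\<in>set (Z i). n < l \<and> \<beta> < \<zeta>' \<and> (\<exists>m. \<zeta>' = oadd \<beta> m))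
      \<and> (\<forall>a b. teval (p (Suc n) (enumerate (\<nu> \<gamma> n m) i)) a \<noteq> teval (p (Suc n) (enumerate (\<nu> \<gamma> n m) i)) b \<longrightarrow>
            (\<exists>(l, \<zeta>')\<in>set (Z i). teval (p l \<zeta>') a \<noteq> teval (p l \<zeta>') b))"
    unfolding E_def by (rule bchoice)
  then obtain Z where Z: "\<forall>i\<in>set I. (\<forall>(l, \<zeta>')\<in>set (Z i). n < l \<and> \<beta> < \<zeta>' \<and> (\<exists>m. \<zeta>' = oadd \<beta> m))
      \<and> (\<forall>a b. teval (p (Suc n) (enumerate (\<nu> \<gamma> n m) i)) a \<noteq> teval (p (Suc n) (enumerate (\<nu> \<gamma> n m) i)) b \<longrightarrow>
            (\<exists>(l, \<zeta>')\<in>set (Z i). teval (p l \<zeta>') a \<noteq> teval (p l \<zeta>') b))"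
    by blast
  show ?case
  proof (intro exI[of _ "concat (map Z I)"] conjI allI impI)
    show "\<forall>(l, \<zeta>)\<in>set (concat (map Z I)). n < l \<and> \<beta> < \<zeta> \<and> (\<exists>m. \<zeta> = oadd \<beta> m)"
      using Z by auto
    fix a b assume ne: "teval (p n \<alpha>) a \<noteq> teval (p n \<alpha>) b"
    have "k0 \<le> k" unfolding k_def by simp
    then have "gfun \<nu> j f \<gamma> n m k (\<lambda>\<zeta>. teval (p (Suc n) \<zeta>) a) \<noteq> gfun \<nu> j f \<gamma> n m k (\<lambda>\<zeta>. teval (p (Suc n) \<zeta>) b)"
      using ne k0[rule_format, OF \<open>k0 \<le> k\<close>] g(3) by simp
    then have "map (\<lambda>i. teval (p (Suc n) (enumerate (\<nu> \<gamma> n m) i)) a) I \<noteq> map (\<lambda>i. teval (p (Suc n) (enumerate (\<nu> \<gamma> n m) i)) b) I"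
      unfolding gfun_def I_def by (metis (no_types, lifting))
    then have "\<exists>i\<in>set I. teval (p (Suc n) (enumerate (\<nu> \<gamma> n m) i)) a \<noteq> teval (p (Suc n) (enumerate (\<nu> \<gamma> n m) i)) b"
      by (simp only: map_eq_conv bex_simps not_all) simp
    then obtain i where i: "i \<in> set I" "teval (p (Suc n) (enumerate (\<nu> \<gamma> n m) i)) a \<noteq> teval (p (Suc n) (enumerate (\<nu> \<gamma> n m) i)) b"
      by (rule bexE)
    have Zi: "\<exists>(l, \<zeta>')\<in>set (Z i). teval (p l \<zeta>') a \<noteq> teval (p l \<zeta>') b"
      using conjunct2[OF bspec[OF Z i(1)], rule_format, OF i(2)] .
    have sub: "set (Z i) \<subseteq> set (concat (map Z I))" using i(1) by auto
    from Zi obtain x where x: "x \<in> set (Z i)" "(case x of (l, \<zeta>') \<Rightarrow> teval (p l \<zeta>') a \<noteq> teval (p l \<zeta>') b)"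
      by (rule bexE)
    show "\<exists>(l, \<zeta>)\<in>set (concat (map Z I)). teval (p l \<zeta>) a \<noteq> teval (p l \<zeta>) b"
      using x sub by (intro bexI[of _ x]) auto
  qed
qed

theorem mainTheorem10:
  fixes \<delta> :: "'o::{wellorder,no_top}"
    and \<nu> :: "'o \<Rightarrow> nat \<Rightarrow> nat \<Rightarrow> 'o set"
    and j :: "'o \<Rightarrow> nat \<Rightarrow> nat \<Rightarrow> nat \<Rightarrow> nat"
    and f :: "'o \<Rightarrow> nat \<Rightarrow> nat \<Rightarrow> nat \<Rightarrow> bool list \<Rightarrow> bool"
    and p :: "nat \<Rightarrow> 'o \<Rightarrow> vterm"
  assumes "olimit \<delta>"
    and "countable {x. x < \<delta>}"
    and "in_R \<delta> \<nu> j f p"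
  shows "(\<forall>n \<alpha>. \<alpha> < \<delta> \<longrightarrow>
            (\<exists>vs. (\<forall>(l, k)\<in>set vs. l < n) \<and> determined_by (p n \<alpha>) (map tvar vs)))
       \<and> (\<forall>n m. \<exists>zs. (\<forall>(l, k)\<in>set zs. n < l)
            \<and> determined_by (tvar (n, m)) (map (\<lambda>(l, k). p l (ofin k)) zs))
       \<and> (\<forall>\<beta> n \<alpha>. \<beta> < \<delta> \<and> (\<forall>m. oadd \<beta> m < \<alpha>) \<and> (\<exists>m. \<alpha> < oadd \<delta> m) \<longrightarrow>
            (\<exists>zs. (\<forall>(l, \<zeta>)\<in>set zs. n < l \<and> \<beta> < \<zeta> \<and> (\<exists>m. \<zeta> = oadd \<beta> m))
               \<and> (\<forall>a b. teval (p n \<alpha>) a \<noteq> teval (p n \<alpha>) b \<longrightarrow>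
                    map (\<lambda>(l, \<zeta>). teval (p l \<zeta>) a) zs \<noteq> map (\<lambda>(l, \<zeta>). teval (p l \<zeta>) b) zs)))"
proof -
  have R: "in_R \<delta> \<nu> j f p" by fact
  have P3: "\<forall>\<beta> n \<alpha>. \<beta> < \<delta> \<and> (\<forall>m. oadd \<beta> m < \<alpha>) \<and> (\<exists>m. \<alpha> < oadd \<delta> m) \<longrightarrow>
            (\<exists>zs. (\<forall>(l, \<zeta>)\<in>set zs. n < l \<and> \<beta> < \<zeta> \<and> (\<exists>m. \<zeta> = oadd \<beta> m))
               \<and> (\<forall>a b. teval (p n \<alpha>) a \<noteq> teval (p n \<alpha>) b \<longrightarrow>
                    map (\<lambda>(l, \<zeta>). teval (p l \<zeta>) a) zs \<noteq> map (\<lambda>(l, \<zeta>). teval (p l \<zeta>) b) zs))"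
  proof (intro allI impI)
    fix \<beta> n \<alpha>
    assume h: "\<beta> < \<delta> \<and> (\<forall>m. oadd \<beta> m < \<alpha>) \<and> (\<exists>m. \<alpha> < oadd \<delta> m)"
    from main_iii[OF R, of \<beta> \<alpha> n] h obtain zs where
      zs: "\<forall>(l, \<zeta>)\<in>set zs. n < l \<and> \<beta> < \<zeta> \<and> (\<exists>m. \<zeta> = oadd \<beta> m)"
      "\<forall>a b. teval (p n \<alpha>) a \<noteq> teval (p n \<alpha>) b \<longrightarrow>
            (\<exists>(l, \<zeta>)\<in>set zs. teval (p l \<zeta>) a \<noteq> teval (p l \<zeta>) b)" by blast
    show "\<exists>zs. (\<forall>(l, \<zeta>)\<in>set zs. n < l \<and> \<beta> < \<zeta> \<and> (\<exists>m. \<zeta> = oadd \<beta> m))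
               \<and> (\<forall>a b. teval (p n \<alpha>) a \<noteq> teval (p n \<alpha>) b \<longrightarrow>
                    map (\<lambda>(l, \<zeta>). teval (p l \<zeta>) a) zs \<noteq> map (\<lambda>(l, \<zeta>). teval (p l \<zeta>) b) zs)"
    proof (intro exI[of _ zs] conjI allI impI)
      show "\<forall>(l, \<zeta>)\<in>set zs. n < l \<and> \<beta> < \<zeta> \<and> (\<exists>m. \<zeta> = oadd \<beta> m)" by (rule zs(1))
      fix a b assume "teval (p n \<alpha>) a \<noteq> teval (p n \<alpha>) b"
      then obtain l \<zeta> where "(l, \<zeta>) \<in> set zs" "teval (p l \<zeta>) a \<noteq> teval (p l \<zeta>) b" using zs(2) by blast
      then show "map (\<lambda>(l, \<zeta>). teval (p l \<zeta>) a) zs \<noteq> map (\<lambda>(l, \<zeta>). teval (p l \<zeta>) b) zs"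
        by (metis (no_types, lifting) case_prod_conv map_eq_conv)
    qed
  qed
  have P1: "\<forall>n \<alpha>. \<alpha> < \<delta> \<longrightarrow>
            (\<exists>vs. (\<forall>(l, k)\<in>set vs. l < n) \<and> determined_by (p n \<alpha>) (map tvar vs))"
  proof (intro allI impI)
    fix n \<alpha> assume "\<alpha> < \<delta>"
    then have "depends_only (p n \<alpha>) {(l, k). l < n}" using R unfolding in_R_def by blast
    then obtain s where s: "set (fst s) \<subseteq> {(l, k). l < n}" "teq (p n \<alpha>) s" unfolding depends_only_def by blast
    have "determined_by (p n \<alpha>) (map tvar (fst s))"
      unfolding determined_by_def
    proof (intro allI impI)
      fix a b assume "map (\<lambda>t. teval t a) (map tvar (fst s)) = map (\<lambda>t. teval t b) (map tvar (fst s))"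
      then have "map a (fst s) = map b (fst s)" by (simp add: teval_def tvar_def comp_def)
      then have "teval s a = teval s b" unfolding teval_def by (rule arg_cong)
      then show "teval (p n \<alpha>) a = teval (p n \<alpha>) b" using s(2) by (simp add: teq_def)
    qed
    then show "\<exists>vs. (\<forall>(l, k)\<in>set vs. l < n) \<and> determined_by (p n \<alpha>) (map tvar vs)"
      using s(1) by blast
  qed
  have P2: "\<forall>n m. \<exists>zs. (\<forall>(l, k)\<in>set zs. n < l)
            \<and> determined_by (tvar (n, m)) (map (\<lambda>(l, k). p l (ofin k)) zs)"
  proof (intro allI)
    fix n m
    obtain y where "y < \<delta>" using assms(1) unfolding olimit_def by blast
    moreover have "ozero \<le> y" unfolding ozero_def by (rule Least_le) simp
    ultimately have z: "ozero < \<delta>" by simp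
    have c2: "\<forall>m'. oadd ozero m' < oadd \<delta> m"
      using oadd_less_limit[OF assms(1) z] oadd_ge[of \<delta> m] by (blast intro: less_le_trans)
    have c3: "\<exists>m0. oadd \<delta> m < oadd \<delta> m0"
      by (intro exI[of _ "Suc m"]) (simp add: osucc_gt)
    from P3[rule_format, of ozero "oadd \<delta> m" n] z c2 c3 obtain zs where
      zs: "\<forall>(l, \<zeta>)\<in>set zs. n < l \<and> ozero < \<zeta> \<and> (\<exists>m. \<zeta> = oadd ozero m)"
      "\<forall>a b. teval (p n (oadd \<delta> m)) a \<noteq> teval (p n (oadd \<delta> m)) b \<longrightarrow>
          map (\<lambda>(l, \<zeta>). teval (p l \<zeta>) a) zs \<noteq> map (\<lambda>(l, \<zeta>). teval (p l \<zeta>) b) zs" by blast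
    define zs' where "zs' = map (\<lambda>(l, \<zeta>). (l, SOME k. \<zeta> = oadd ozero k)) zs"
    have eq: "map (\<lambda>t. teval t a) (map (\<lambda>(l, k). p l (ofin k)) zs') = map (\<lambda>(l, \<zeta>). teval (p l \<zeta>) a) zs" for a
    proof -
      have "p l (ofin (SOME k. \<zeta> = oadd ozero k)) = p l \<zeta>" if "(l, \<zeta>) \<in> set zs" for l \<zeta>
      proof -
        have "\<exists>k. \<zeta> = oadd ozero k" using zs(1) that by blast
        then have "\<zeta> = oadd ozero (SOME k. \<zeta> = oadd ozero k)" by (rule someI_ex)
        then show ?thesis by (simp add: ofin_def)
      qed
      then show ?thesis unfolding zs'_def by (auto intro!: map_cong)
    qed
    have tv: "teval (tvar (n, m)) a = teval (p n (oadd \<delta> m)) a" for a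
    proof -
      have "teq (p n (oadd \<delta> m)) (tvar (n, m))" using R unfolding in_R_def by blast
      then show ?thesis unfolding teq_def by simp
    qed
    have "determined_by (tvar (n, m)) (map (\<lambda>(l, k). p l (ofin k)) zs')"
      unfolding determined_by_def eq tv using zs(2) by metis
    moreover have "\<forall>(l, k)\<in>set zs'. n < l" using zs(1) unfolding zs'_def by auto
    ultimately show "\<exists>zs. (\<forall>(l, k)\<in>set zs. n < l)
            \<and> determined_by (tvar (n, m)) (map (\<lambda>(l, k). p l (ofin k)) zs)" by blast
  qed
  show ?thesis by (rule conjI[OF P1 conjI[OF P2 P3]])
qed

end
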